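(* Let $1\le k<n$. The map $F_k$, defined on $S\in\Theta(k,2n)$ by $F_k(S)=((\lambda^{(1)}_i+\lambda^{(2)}_i)_{1\le i\le k};t)$ with $t=1$ if $S$ is assigned $\uparrow$, $t=2$ if $S$ is assigned $\downarrow$, and $t=0$ otherwise, is an injection $\Theta(k,2n)\to\tilde P(n-k,n)$.
   Context: Root system $D_n$: positive roots $e_a\pm e_b$ ($a<b$); simple roots $e_i-e_{i+1}$ ($i<n$), $e_{n-1}+e_n$; order $\alpha\le\beta$ iff $\beta-\alpha$ is a nonnegative integer combination of simple roots. Base region: roots $e_a\pm e_b$ with $a\le k<b$; its $i$-th double-tailed diamond consists of $e_{k+1-i}\pm e_b$, $b>k$. Top region: $e_a+e_b$, $a<b\le k$. For a set $S$, $\lambda^{(1)}_i$ = number of roots of $S$ in the $i$-th double-tailed diamond, $\lambda^{(2)}_i$ = number of roots of $S$ of the form $e_a+e_{k+1-i}$ with $a<k+1-i$; if $\lambda^{(1)}_i=n-k$ for some $i$, $S$ is assigned $\uparrow$ if it contains $e_{k+1-i}-e_n$ and $\downarrow$ if it contains $e_{k+1-i}+e_n$ (for such $i$). $\Theta(k,2n)$ is the set of subsets $S$ of the union of the two regions meeting each region in a lower order ideal of that region and such that, for each top root $e_a+e_b$, $e_a+e_b\in S$ whenever $S$ contains more than $2n-2k$ roots of the diamonds indexed by $a$ and $b$ (diamonds $k+1-a$, $k+1-b$) combined, and $e_a+e_b\notin S$ whenever fewer. $\tilde P(n-k,n)$ is the set of pairs $(\gamma;t)$ with $\gamma=(\gamma_1\ge\dots\ge\gamma_k\ge0)$,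 $\gamma_1\le 2n-1-k$, $\gamma_i>\gamma_{i+1}$ whenever $\gamma_i>n-k$, and $t=0$ if no part of $\gamma$ equals $n-k$, $t\in\{1,2\}$ otherwise. *)

theory Defs
  imports Main
begin

text \<open>Vectors of Z^n are modelled as functions nat => int (coordinates 1..n, zero elsewhere).\<close>

definition ev :: "nat \<Rightarrow> nat \<Rightarrow> int" where
  "ev a = (\<lambda>j. if j = a then 1 else 0)"

definition rminus :: "nat \<Rightarrow> nat \<Rightarrow> nat \<Rightarrow> int" where
  "rminus a b = (\<lambda>j. ev a j - ev b j)"

definition rplus :: "nat \<Rightarrow> nat \<Rightarrow> nat \<Rightarrow> int" where
  "rplus a b = (\<lambda>j. ev a j + ev b j)"

text \<open>Simple roots of D_n: e_i - e_{i+1} (1 <= i < n) and e_{n-1} + e_n (index n).\<close>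
definition simple_root :: "nat \<Rightarrow> nat \<Rightarrow> nat \<Rightarrow> int" where
  "simple_root n i = (if i < n then rminus i (Suc i) else rplus (n - 1) n)"

definition root_le :: "nat \<Rightarrow> (nat \<Rightarrow> int) \<Rightarrow> (nat \<Rightarrow> int) \<Rightarrow> bool" where
  "root_le n \<alpha> \<beta> = (\<exists>c :: nat \<Rightarrow> nat. \<forall>j.
      \<beta> j - \<alpha> j = (\<Sum>i\<in>{1..n}. int (c i) * simple_root n i j))"

definition lower_ideal :: "nat \<Rightarrow> (nat \<Rightarrow> int) set \<Rightarrow> (nat \<Rightarrow> int) set \<Rightarrow> bool" where
  "lower_ideal n R I = (I \<subseteq> R \<and> (\<forall>\<beta>\<in>I. \<forall>\<alpha>\<in>R. root_le n \<alpha> \<beta> \<longrightarrow> \<alpha> \<in> I))"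

definition base_region :: "nat \<Rightarrow> nat \<Rightarrow> (nat \<Rightarrow> int) set" where
  "base_region k n = {rminus a b | a b. 1 \<le> a \<and> a \<le> k \<and> k < b \<and> b \<le> n}
                   \<union> {rplus a b | a b. 1 \<le> a \<and> a \<le> k \<and> k < b \<and> b \<le> n}"

definition top_region :: "nat \<Rightarrow> (nat \<Rightarrow> int) set" where
  "top_region k = {rplus a b | a b. 1 \<le> a \<and> a < b \<and> b \<le> k}"

definition diamond_at :: "nat \<Rightarrow> nat \<Rightarrow> nat \<Rightarrow> (nat \<Rightarrow> int) set" where
  "diamond_at k n a = {rminus a b | b. k < b \<and> b \<le> n} \<union> {rplus a b | b. k < b \<and> b \<le> n}"

definition diamond :: "nat \<Rightarrow> nat \<Rightarrow> nat \<Rightarrow> (nat \<Rightarrow> int) set" where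
  "diamond k n i = diamond_at k n (k + 1 - i)"

definition lam1 :: "nat \<Rightarrow> nat \<Rightarrow> (nat \<Rightarrow> int) set \<Rightarrow> nat \<Rightarrow> nat" where
  "lam1 k n S i = card (S \<inter> diamond k n i)"

definition lam2 :: "nat \<Rightarrow> (nat \<Rightarrow> int) set \<Rightarrow> nat \<Rightarrow> nat" where
  "lam2 k S i = card {rplus a (k + 1 - i) | a. 1 \<le> a \<and> a < k + 1 - i \<and> rplus a (k + 1 - i) \<in> S}"

definition Theta :: "nat \<Rightarrow> nat \<Rightarrow> (nat \<Rightarrow> int) set set" where
  "Theta k n = {S. S \<subseteq> base_region k n \<union> top_region k
      \<and> lower_ideal n (base_region k n) (S \<inter> base_region k n)
      \<and> lower_ideal n (top_region k) (S \<inter> top_region k)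
      \<and> (\<forall>a b. 1 \<le> a \<and> a < b \<and> b \<le> k \<longrightarrow>
            (card (S \<inter> (diamond_at k n a \<union> diamond_at k n b)) > 2*n - 2*k \<longrightarrow> rplus a b \<in> S)
          \<and> (card (S \<inter> (diamond_at k n a \<union> diamond_at k n b)) < 2*n - 2*k \<longrightarrow> rplus a b \<notin> S))}"

text \<open>Arrow assignment: 1 = up, 2 = down, 0 = none.\<close>
definition arrow :: "nat \<Rightarrow> nat \<Rightarrow> (nat \<Rightarrow> int) set \<Rightarrow> nat" where
  "arrow k n S =
     (if \<exists>i\<in>{1..k}. lam1 k n S i = n - k \<and> rminus (k + 1 - i) n \<in> S then 1
      else if \<exists>i\<in>{1..k}. lam1 k n S i = n - k \<and> rplus (k + 1 - i) n \<in> S then 2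
      else 0)"

definition Fk :: "nat \<Rightarrow> nat \<Rightarrow> (nat \<Rightarrow> int) set \<Rightarrow> nat list \<times> nat" where
  "Fk k n S = (map (\<lambda>i. lam1 k n S i + lam2 k S i) [1..<k+1], arrow k n S)"

text \<open>\<open>Ptilde m n\<close> = P~(m,n); partitions have k = n - m parts, gamma_i = gamma ! (i-1).\<close>
definition Ptilde :: "nat \<Rightarrow> nat \<Rightarrow> (nat list \<times> nat) set" where
  "Ptilde m n = {(\<gamma>, t). length \<gamma> = n - m
      \<and> (\<forall>i. i + 1 < length \<gamma> \<longrightarrow> \<gamma> ! i \<ge> \<gamma> ! (i + 1))
      \<and> (\<forall>i<length \<gamma>. \<gamma> ! i \<le> 2*n - 1 - (n - m))
      \<and> (\<forall>i. i + 1 < length \<gamma> \<longrightarrow> \<gamma> ! i > m \<longrightarrow> \<gamma> ! i > \<gamma> ! (i + 1))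
      \<and> (if m \<in> set \<gamma> then t \<in> {1, 2} else t = 0)}"

end

theory Submission imports Defs begin

lemma rl_refl: "root_le n a a"
  unfolding root_le_def by (rule exI[of _ "\<lambda>_. 0"]) simp

lemma rl_trans: "root_le n a b \<Longrightarrow> root_le n b c \<Longrightarrow> root_le n a c"
  unfolding root_le_def
proof -
  assume "\<exists>c. \<forall>j. b j - a j = (\<Sum>i\<in>{1..n}. int (c i) * simple_root n i j)"
     and "\<exists>d. \<forall>j. c j - b j = (\<Sum>i\<in>{1..n}. int (d i) * simple_root n i j)"
  then obtain c1 c2 where 1: "\<forall>j. b j - a j = (\<Sum>i\<in>{1..n}. int (c1 i) * simple_root n i j)"
    and 2: "\<forall>j. c j - b j = (\<Sum>i\<in>{1..n}. int (c2 i) * simple_root n i j)" by blast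
  show "\<exists>d. \<forall>j. c j - a j = (\<Sum>i\<in>{1..n}. int (d i) * simple_root n i j)"
  proof (rule exI[of _ "\<lambda>i. c1 i + c2 i"], intro allI)
    fix j
    have "c j - a j = (b j - a j) + (c j - b j)" by simp
    also have "\<dots> = (\<Sum>i\<in>{1..n}. int (c1 i + c2 i) * simple_root n i j)"
      using 1 2 by (simp add: sum.distrib[symmetric] algebra_simps)
    finally show "c j - a j = (\<Sum>i\<in>{1..n}. int (c1 i + c2 i) * simple_root n i j)" .
  qed
qed

lemma rl_simple: assumes "1 \<le> i" "i \<le> n" "\<And>j. b j = a j + simple_root n i j"
  shows "root_le n a b"
  unfolding root_le_def
proof (rule exI[of _ "\<lambda>x. if x = i then 1 else 0"], intro allI)
  fix j
  have "(\<Sum>x\<in>{1..n}. int (if x = i then 1 else 0) * simple_root n x j)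
      = (\<Sum>x\<in>{1..n}. if x = i then simple_root n x j else 0)"
    by (rule sum.cong) auto
  also have "\<dots> = simple_root n i j" using assms(1,2) by simp
  finally show "b j - a j = (\<Sum>x\<in>{1..n}. int (if x = i then 1 else 0) * simple_root n x j)"
    using assms(3) by simp
qed

lemma rl_chain: assumes "1 \<le> p" "p \<le> q" "q \<le> n"
  shows "root_le n a (\<lambda>j. a j + ev p j - ev q j)"
  using assms(2,3)
proof (induction q rule: dec_induct)
  case base
  then show ?case by (simp add: rl_refl)
next
  case (step q)
  have "root_le n a (\<lambda>j. a j + ev p j - ev q j)" using step by simp
  moreover have "root_le n (\<lambda>j. a j + ev p j - ev q j) (\<lambda>j. a j + ev p j - ev (Suc q) j)"
    apply (rule rl_simple[of q])
    using step assms(1) by (auto simp: simple_root_def rminus_def)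
  ultimately show ?case by (rule rl_trans)
qed

lemma rl_diff: assumes "1 \<le> p" "p \<le> q" "q \<le> n" "\<And>j. b j = a j + ev p j - ev q j"
  shows "root_le n a b"
proof -
  have "b = (\<lambda>j. a j + ev p j - ev q j)" using assms(4) by auto
  then show ?thesis using rl_chain[OF assms(1-3)] by simp
qed

lemma rl_plus: assumes "1 \<le> x" "x < n" "1 \<le> y" "y \<le> n" "\<And>j. b j = a j + ev x j + ev y j"
  shows "root_le n a b"
proof -
  have n2: "2 \<le> n" using assms by simp
  define a1 where "a1 = (\<lambda>j. a j + ev x j - ev (n-1) j)"
  define a2 where "a2 = (\<lambda>j. a1 j + ev y j - ev n j)"
  have 1: "root_le n a a1" unfolding a1_def by (rule rl_chain) (use assms in auto)
  have 2: "root_le n a1 a2" unfolding a2_def by (rule rl_chain) (use assms in auto)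
  have 3: "root_le n a2 b"
    apply (rule rl_simple[of n])
    using n2 assms(5) by (auto simp: simple_root_def rplus_def a2_def a1_def)
  show ?thesis using rl_trans[OF rl_trans[OF 1 2] 3] .
qed


lemma rminus_inj: "rminus a b = rminus c d \<Longrightarrow> a \<noteq> b \<Longrightarrow> c \<noteq> d \<Longrightarrow> a = c \<and> b = d"
proof -
  assume h: "rminus a b = rminus c d" "a \<noteq> b" "c \<noteq> d"
  have e: "\<And>x. rminus a b x = rminus c d x" using h(1) by simp
  have "rminus c d a = 1" using e[of a] h(2) by (simp add: rminus_def ev_def)
  hence 1: "a = c" by (auto simp: rminus_def ev_def split: if_splits)
  have "rminus c d b = -1" using e[of b] h(2) by (simp add: rminus_def ev_def)
  hence "b = d" by (auto simp: rminus_def ev_def split: if_splits)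
  with 1 show ?thesis by simp
qed

lemma rplus_nz: "rplus c d x \<noteq> 0 \<Longrightarrow> x = c \<or> x = d"
  by (cases "x = c"; cases "x = d") (simp_all add: rplus_def ev_def)

lemma rplus_inj: "rplus a b = rplus c d \<Longrightarrow> a < b \<Longrightarrow> c < d \<Longrightarrow> a = c \<and> b = d"
proof -
  assume h: "rplus a b = rplus c d" "a < b" "c < d"
  have e: "\<And>x. rplus a b x = rplus c d x" using h(1) by simp
  have "rplus a b a \<noteq> 0" "rplus a b b \<noteq> 0" "rplus c d c \<noteq> 0" "rplus c d d \<noteq> 0"
    by (auto simp: rplus_def ev_def)
  hence "rplus c d a \<noteq> 0" "rplus c d b \<noteq> 0" "rplus a b c \<noteq> 0" "rplus a b d \<noteq> 0"
    using e by metis+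
  hence "a \<in> {c,d}" "b \<in> {c,d}" "c \<in> {a,b}" "d \<in> {a,b}"
    using rplus_nz by blast+
  with h(2,3) show ?thesis by auto
qed

lemma rminus_ne_rplus: "a \<noteq> b \<Longrightarrow> rminus a b \<noteq> rplus c d"
proof
  assume h: "a \<noteq> b" "rminus a b = rplus c d"
  have "rminus a b b = rplus c d b" using h(2) by simp
  hence "rplus c d b = -1" using h(1) by (simp add: rminus_def ev_def)
  thus False by (auto simp: rplus_def ev_def split: if_splits)
qed


locale th = fixes k n :: nat and S :: "(nat \<Rightarrow> int) set"
  assumes k1: "1 \<le> k" and kn: "k < n" and ST: "S \<in> Theta k n"
begin

definition "M a = {j. k < j \<and> j \<le> n \<and> rminus a j \<in> S}"
definition "P a = {j. k < j \<and> j \<le> n \<and> rplus a j \<in> S}"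
definition "A b = {c. 1 \<le> c \<and> c < b \<and> rplus c b \<in> S}"
definition "L a = card (M a) + card (P a)"

lemma S_sub: "S \<subseteq> base_region k n \<union> top_region k"
  using ST by (simp add: Theta_def)

lemma ideal_base: "\<beta> \<in> S \<Longrightarrow> \<beta> \<in> base_region k n \<Longrightarrow> \<alpha> \<in> base_region k n \<Longrightarrow> root_le n \<alpha> \<beta> \<Longrightarrow> \<alpha> \<in> S"
  using ST unfolding Theta_def lower_ideal_def by blast

lemma ideal_top: "\<beta> \<in> S \<Longrightarrow> \<beta> \<in> top_region k \<Longrightarrow> \<alpha> \<in> top_region k \<Longrightarrow> root_le n \<alpha> \<beta> \<Longrightarrow> \<alpha> \<in> S"
  using ST unfolding Theta_def lower_ideal_def by blast

lemma base_mem: "1 \<le> a \<Longrightarrow> a \<le> k \<Longrightarrow> k < j \<Longrightarrow> j \<le> n \<Longrightarrow> rminus a j \<in> base_region k n \<and> rplus a j \<in> base_region k n"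
  unfolding base_region_def by blast

lemma top_mem: "1 \<le> c \<Longrightarrow> c < b \<Longrightarrow> b \<le> k \<Longrightarrow> rplus c b \<in> top_region k"
  unfolding top_region_def by blast

lemma M_mono: assumes "1 \<le> c" "c \<le> b" "b \<le> k" shows "M c \<subseteq> M b"
proof
  fix j assume "j \<in> M c"
  hence j: "k < j" "j \<le> n" "rminus c j \<in> S" by (auto simp: M_def)
  have "root_le n (rminus b j) (rminus c j)"
    by (rule rl_diff[of c b]) (use assms kn in \<open>auto simp: rminus_def\<close>)
  hence "rminus b j \<in> S" using ideal_base[OF j(3)] base_mem j assms by auto
  thus "j \<in> M b" using j by (simp add: M_def)
qed

lemma P_mono: assumes "1 \<le> c" "c \<le> b" "b \<le> k" shows "P c \<subseteq> P b"
proof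
  fix j assume "j \<in> P c"
  hence j: "k < j" "j \<le> n" "rplus c j \<in> S" by (auto simp: P_def)
  have "root_le n (rplus b j) (rplus c j)"
    by (rule rl_diff[of c b]) (use assms kn in \<open>auto simp: rplus_def\<close>)
  hence "rplus b j \<in> S" using ideal_base[OF j(3)] base_mem j assms by auto
  thus "j \<in> P b" using j by (simp add: P_def)
qed

lemma M_down: assumes "j \<in> M a" "k < j'" "j' \<le> j" "1 \<le> a" "a \<le> k" shows "j' \<in> M a"
proof -
  have j: "k < j" "j \<le> n" "rminus a j \<in> S" using assms by (auto simp: M_def)
  have "root_le n (rminus a j') (rminus a j)"
    by (rule rl_diff[of j' j]) (use assms j k1 in \<open>auto simp: rminus_def\<close>)
  hence "rminus a j' \<in> S" using ideal_base[OF j(3)] base_mem j assms by auto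
  thus ?thesis using j assms by (simp add: M_def)
qed

lemma P_up: assumes "j \<in> P a" "j \<le> j'" "j' \<le> n" "1 \<le> a" "a \<le> k" shows "j' \<in> P a"
proof -
  have j: "k < j" "j \<le> n" "rplus a j \<in> S" using assms by (auto simp: P_def)
  have "root_le n (rplus a j') (rplus a j)"
    by (rule rl_diff[of j j']) (use assms j k1 in \<open>auto simp: rplus_def\<close>)
  hence "rplus a j' \<in> S" using ideal_base[OF j(3)] base_mem j assms by auto
  thus ?thesis using j assms by (simp add: P_def)
qed

lemma P_M: assumes "j \<in> P a" "k < x" "x \<le> n" "x \<noteq> n \<or> j \<noteq> n" "1 \<le> a" "a \<le> k" shows "x \<in> M a"
proof -
  have j: "k < j" "j \<le> n" "rplus a j \<in> S" using assms by (auto simp: P_def)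
  have "root_le n (rminus a x) (rplus a j)"
  proof (cases "x < n")
    case True
    show ?thesis by (rule rl_plus[of x n j]) (use assms j k1 True in \<open>auto simp: rplus_def rminus_def\<close>)
  next
    case False
    hence "j < n" using assms j by auto
    show ?thesis by (rule rl_plus[of j n x]) (use assms j k1 \<open>j < n\<close> in \<open>auto simp: rplus_def rminus_def\<close>)
  qed
  hence "rminus a x \<in> S" using ideal_base[OF j(3)] base_mem j assms by auto
  thus ?thesis using assms by (simp add: M_def)
qed

lemma A_up: assumes "c \<in> A b" "c \<le> c'" "c' < b" "b \<le> k" shows "c' \<in> A b"
proof -
  have c: "1 \<le> c" "c < b" "rplus c b \<in> S" using assms by (auto simp: A_def)
  have "root_le n (rplus c' b) (rplus c b)"
    by (rule rl_diff[of c c']) (use assms c kn in \<open>auto simp: rplus_def\<close>)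
  hence "rplus c' b \<in> S" using ideal_top[OF c(3)] top_mem c assms by auto
  thus ?thesis using c assms by (simp add: A_def)
qed

lemma A_mono: assumes "c \<in> A b'" "b' \<le> b" "b \<le> k" shows "c \<in> A b"
proof -
  have c: "1 \<le> c" "c < b'" "rplus c b' \<in> S" using assms by (auto simp: A_def)
  have "root_le n (rplus c b) (rplus c b')"
    by (rule rl_diff[of b' b]) (use assms c kn in \<open>auto simp: rplus_def\<close>)
  hence "rplus c b \<in> S" using ideal_top[OF c(3)] top_mem c assms by auto
  thus ?thesis using c assms by (simp add: A_def)
qed

lemma M_sub: "M a \<subseteq> {k<..n}" and P_sub: "P a \<subseteq> {k<..n}" and A_sub: "A b \<subseteq> {1..<b}"
  by (auto simp: M_def P_def A_def)

lemma fin: "finite (M a)" "finite (P a)" "finite (A b)"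
  using finite_subset[OF M_sub] finite_subset[OF P_sub] finite_subset[OF A_sub] by simp_all

lemma card_M: "card (M a) \<le> n - k" using card_mono[OF _ M_sub] by simp
lemma card_P: "card (P a) \<le> n - k" using card_mono[OF _ P_sub] by simp
lemma card_A: "card (A b) \<le> b - 1" using card_mono[OF _ A_sub] by simp

lemma dia_eq: assumes "1 \<le> a" "a \<le> k"
  shows "S \<inter> diamond_at k n a = rminus a ` M a \<union> rplus a ` P a"
  unfolding diamond_at_def M_def P_def by blast

lemma L1_eq: assumes "1 \<le> a" "a \<le> k" shows "card (S \<inter> diamond_at k n a) = L a"
proof -
  have i1: "inj_on (rminus a) (M a)"
    by (rule inj_onI) (use rminus_inj assms M_sub in fastforce)
  have i2: "inj_on (rplus a) (P a)"
    by (rule inj_onI) (use rplus_inj assms P_sub in fastforce)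
  have ne: "a \<noteq> x" if "x \<in> M a" for x using M_sub that assms by force
  have d: "rminus a ` M a \<inter> rplus a ` P a = {}"
    using rminus_ne_rplus ne by blast
  show ?thesis unfolding dia_eq[OF assms] L_def
    using card_Un_disjoint[OF finite_imageI[OF fin(1)] finite_imageI[OF fin(2)] d]
      card_image[OF i1] card_image[OF i2] by simp
qed

lemma L2_eq: "card {rplus c b |c. 1 \<le> c \<and> c < b \<and> rplus c b \<in> S} = card (A b)"
proof -
  have "{rplus c b |c. 1 \<le> c \<and> c < b \<and> rplus c b \<in> S} = (\<lambda>c. rplus c b) ` A b"
    unfolding A_def by blast
  moreover have "inj_on (\<lambda>c. rplus c b) (A b)"
    by (rule inj_onI) (use rplus_inj A_sub in fastforce)
  ultimately show ?thesis by (simp add: card_image)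
qed

lemma dia_disj: assumes "a \<noteq> b" "a \<le> k" "b \<le> k"
  shows "diamond_at k n a \<inter> diamond_at k n b = {}"
proof -
  { fix x assume "x \<in> diamond_at k n a" "x \<in> diamond_at k n b"
    then obtain j j' where "k < j" "k < j'"
      "(x = rminus a j \<or> x = rplus a j) \<and> (x = rminus b j' \<or> x = rplus b j')"
      unfolding diamond_at_def by blast
    moreover have "a \<noteq> j" "b \<noteq> j'" "a < j" "b < j'" using \<open>k < j\<close> \<open>k < j'\<close> assms by auto
    ultimately have False using assms rminus_inj[of a j b j'] rplus_inj[of a j b j'] rminus_ne_rplus[of a j b j']
      rminus_ne_rplus[of b j' a j] by auto
  }
  thus ?thesis by blast
qed

lemma theta_cond: assumes "1 \<le> c" "c < b" "b \<le> k"
  shows "(L c + L b > 2*n - 2*k \<longrightarrow> c \<in> A b) \<and> (c \<in> A b \<longrightarrow> L c + L b \<ge> 2*n - 2*k)"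
proof -
  have fd: "finite (diamond_at k n a)" for a
    unfolding diamond_at_def by simp
  have "card (S \<inter> (diamond_at k n c \<union> diamond_at k n b)) = card (S \<inter> diamond_at k n c) + card (S \<inter> diamond_at k n b)"
    using dia_disj[of c b] assms fd
    by (subst card_Un_disjoint[symmetric]) (auto simp: Int_Un_distrib)
  also have "\<dots> = L c + L b" using L1_eq assms by simp
  finally have e: "card (S \<inter> (diamond_at k n c \<union> diamond_at k n b)) = L c + L b" .
  have "(card (S \<inter> (diamond_at k n c \<union> diamond_at k n b)) > 2*n - 2*k \<longrightarrow> rplus c b \<in> S)
          \<and> (card (S \<inter> (diamond_at k n c \<union> diamond_at k n b)) < 2*n - 2*k \<longrightarrow> rplus c b \<notin> S)"
    using ST assms unfolding Theta_def by auto
  thus ?thesis unfolding e A_def using assms by auto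
qed


lemma L_mono: assumes "1 \<le> c" "c \<le> b" "b \<le> k" shows "L c \<le> L b"
  unfolding L_def using card_mono[OF fin(1) M_mono[OF assms]] card_mono[OF fin(2) P_mono[OF assms]] by simp

lemma M_full: assumes "n \<in> M a" "1 \<le> a" "a \<le> k" shows "M a = {k<..n}"
proof
  show "M a \<subseteq> {k<..n}" by (rule M_sub)
  show "{k<..n} \<subseteq> M a"
  proof
    fix x assume "x \<in> {k<..n}"
    thus "x \<in> M a" using M_down[OF assms(1) _ _ assms(2,3)] by auto
  qed
qed

lemma M_full_P: assumes "n \<in> P a" "1 \<le> a" "a \<le> k" shows "{k<..<n} \<subseteq> M a"
proof
  fix x assume "x \<in> {k<..<n}"
  thus "x \<in> M a" using P_M[OF assms(1) _ _ _ assms(2,3)] by auto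
qed

lemma P_n: assumes "j \<in> P a" "1 \<le> a" "a \<le> k" shows "n \<in> P a"
proof -
  have "j \<le> n" using assms(1) by (simp add: P_def)
  thus ?thesis using P_up[OF assms(1) _ order.refl assms(2,3)] by simp
qed

lemma both_n: assumes "n \<in> M a" "n \<in> P a" "1 \<le> a" "a \<le> k" shows "L a \<ge> n - k + 1"
proof -
  have "card (M a) = n - k" using M_full[OF assms(1,3,4)] by simp
  moreover have "P a \<noteq> {}" using assms(2) by auto
  hence "card (P a) \<ge> 1" using fin(2)[of a] by (simp add: Suc_le_eq card_gt_0_iff)
  ultimately show ?thesis by (simp add: L_def)
qed

lemma eq_nk: assumes "L a = n - k" "1 \<le> a" "a \<le> k" shows "n \<in> M a \<or> n \<in> P a"
proof (rule ccontr)
  assume h: "\<not> (n \<in> M a \<or> n \<in> P a)"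
  hence "P a = {}" using P_n assms by blast
  hence "card (M a) = card {k<..n}" using assms(1) by (simp add: L_def)
  hence "M a = {k<..n}" using card_subset_eq[OF _ M_sub] by simp
  thus False using h kn by auto
qed

lemma consist: assumes "L a = n - k" "L a' = n - k" "n \<in> P a" "n \<in> M a'"
  "1 \<le> a" "a \<le> k" "1 \<le> a'" "a' \<le> k" shows False
proof (cases "a \<le> a'")
  case True
  hence "n \<in> P a'" using P_mono[of a a'] assms by auto
  thus False using both_n[of a'] assms by simp
next
  case False
  hence "n \<in> M a" using M_mono[of a' a] assms by auto
  thus False using both_n[of a] assms by simp
qed

definition "G b = L b + card (A b)"

lemma flip_ex: "(\<exists>i\<in>{1..k}. Q (k + 1 - i)) \<longleftrightarrow> (\<exists>a\<in>{1..k}. Q a)"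
proof
  assume "\<exists>i\<in>{1..k}. Q (k + 1 - i)"
  then obtain i where "i \<in> {1..k}" "Q (k+1-i)" by blast
  thus "\<exists>a\<in>{1..k}. Q a" by (intro bexI[of _ "k+1-i"]) auto
next
  assume "\<exists>a\<in>{1..k}. Q a"
  then obtain a where a: "a \<in> {1..k}" "Q a" by blast
  hence "k + 1 - (k + 1 - a) = a" by auto
  thus "\<exists>i\<in>{1..k}. Q (k + 1 - i)" using a by (intro bexI[of _ "k+1-a"]) auto
qed

lemma lam1_eq: "i \<in> {1..k} \<Longrightarrow> lam1 k n S i = L (k + 1 - i)"
  unfolding lam1_def diamond_def by (rule L1_eq) auto

lemma lam2_eq: "lam2 k S i = card (A (k + 1 - i))"
  unfolding lam2_def by (rule L2_eq)

lemma arrow1: "arrow k n S = 1 \<longleftrightarrow> (\<exists>a\<in>{1..k}. L a = n - k \<and> n \<in> M a)"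
proof -
  have "(\<exists>i\<in>{1..k}. lam1 k n S i = n - k \<and> rminus (k + 1 - i) n \<in> S)
     \<longleftrightarrow> (\<exists>i\<in>{1..k}. L (k + 1 - i) = n - k \<and> n \<in> M (k + 1 - i))"
    using lam1_eq kn by (auto simp: M_def)
  also have "\<dots> \<longleftrightarrow> (\<exists>a\<in>{1..k}. L a = n - k \<and> n \<in> M a)" by (rule flip_ex)
  finally show ?thesis unfolding arrow_def by auto
qed

lemma arrow0: "arrow k n S \<noteq> 0 \<longleftrightarrow> (\<exists>a\<in>{1..k}. L a = n - k)"
proof -
  have "(\<exists>i\<in>{1..k}. lam1 k n S i = n - k \<and> rminus (k + 1 - i) n \<in> S)
     \<or> (\<exists>i\<in>{1..k}. lam1 k n S i = n - k \<and> rplus (k + 1 - i) n \<in> S)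
     \<longleftrightarrow> (\<exists>i\<in>{1..k}. L (k + 1 - i) = n - k \<and> (n \<in> M (k + 1 - i) \<or> n \<in> P (k + 1 - i)))"
    using lam1_eq kn by (auto simp: M_def P_def)
  also have "\<dots> \<longleftrightarrow> (\<exists>a\<in>{1..k}. L a = n - k \<and> (n \<in> M a \<or> n \<in> P a))" by (rule flip_ex)
  also have "\<dots> \<longleftrightarrow> (\<exists>a\<in>{1..k}. L a = n - k)"
    using eq_nk by (meson atLeastAtMost_iff)
  finally show ?thesis unfolding arrow_def by auto
qed

lemma arrow_range: "arrow k n S \<in> {0, 1, 2}"
  unfolding arrow_def by auto

lemma Fk_eq: "Fk k n S = (map (\<lambda>i. G (k + 1 - i)) [1..<k+1], arrow k n S)"
  unfolding Fk_def G_def by (auto simp: lam1_eq lam2_eq)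


lemma G_mono: assumes "1 \<le> c" "c \<le> b" "b \<le> k" shows "G c \<le> G b"
proof -
  have "A c \<subseteq> A b" using A_mono[of _ c b] assms by blast
  hence "card (A c) \<le> card (A b)" using fin(3) by (rule card_mono[rotated])
  thus ?thesis using L_mono[OF assms] by (simp add: G_def)
qed

lemma G_le: assumes "1 \<le> b" "b \<le> k" shows "G b \<le> 2*n - 1 - k"
proof -
  have "L b \<le> 2*(n-k)" using card_M[of b] card_P[of b] by (simp add: L_def)
  moreover have "card (A b) \<le> b - 1" by (rule card_A)
  ultimately show ?thesis using assms kn by (simp add: G_def)
qed

lemma G_strict: assumes "2 \<le> b" "b \<le> k" "G b > n - k" shows "G (b - 1) < G b"
proof (rule ccontr)
  assume "\<not> G (b - 1) < G b"
  hence ge: "G b \<le> G (b-1)" by simp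
  have Lm: "L (b-1) \<le> L b" by (rule L_mono) (use assms in auto)
  have As: "A (b-1) \<subseteq> A b" using A_mono[of _ "b-1" b] assms by auto
  have Ac: "card (A (b-1)) \<le> card (A b)" using card_mono[OF fin(3) As] .
  have LL: "L (b-1) = L b" and AA: "card (A (b-1)) = card (A b)"
    using ge Lm Ac by (auto simp: G_def)
  have Aeq: "A (b-1) = A b" using card_subset_eq[OF fin(3) As AA] .
  have "b - 1 \<notin> A (b - 1)" by (simp add: A_def)
  hence nb: "b - 1 \<notin> A b" using Aeq by simp
  have b1: "1 \<le> b - 1" "b - 1 < b" using assms by auto
  have "\<not> (L (b-1) + L b > 2*n - 2*k)" using theta_cond[OF b1 assms(2)] nb by blast
  hence Lb: "L b \<le> n - k" using LL by linarith
  hence "card (A b) > 0" using assms(3) unfolding G_def by linarith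
  then obtain c where c: "c \<in> A b" using card_gt_0_iff[of "A b"] by blast
  hence "c < b" by (simp add: A_def)
  hence "c \<le> b - 1" by simp
  hence "b - 1 \<in> A b" using A_up[OF c _ b1(2) assms(2)] by blast
  thus False using nb by simp
qed

lemma G_nk: "(\<exists>b\<in>{1..k}. G b = n - k) \<longleftrightarrow> (\<exists>a\<in>{1..k}. L a = n - k)"
proof
  assume "\<exists>b\<in>{1..k}. G b = n - k"
  then obtain b where b: "1 \<le> b" "b \<le> k" "G b = n - k" by auto
  show "\<exists>a\<in>{1..k}. L a = n - k"
  proof (cases "card (A b) = 0")
    case True thus ?thesis using b by (auto simp: G_def)
  next
    case False
    then obtain c where c: "c \<in> A b" using card_gt_0_iff[of "A b"] by blast
    hence c1: "1 \<le> c" "c < b" by (auto simp: A_def)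
    have "L c + L b \<ge> 2*n - 2*k" using theta_cond[OF c1 b(2)] c by simp
    moreover have "L c \<le> L b" by (rule L_mono) (use c1 b in auto)
    ultimately have "L b \<ge> n - k" by simp
    thus ?thesis using b False by (simp add: G_def)
  qed
next
  assume "\<exists>a\<in>{1..k}. L a = n - k"
  hence ex: "\<exists>a. 1 \<le> a \<and> a \<le> k \<and> L a = n - k" by auto
  define a where "a = (LEAST a. 1 \<le> a \<and> a \<le> k \<and> L a = n - k)"
  have a: "1 \<le> a" "a \<le> k" "L a = n - k" using LeastI_ex[OF ex] unfolding a_def by auto
  have mn: "\<not> (1 \<le> c \<and> c \<le> k \<and> L c = n - k)" if "c < a" for c
    using not_less_Least[of c "\<lambda>a. 1 \<le> a \<and> a \<le> k \<and> L a = n - k"] that unfolding a_def by blast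
  have "A a = {}"
  proof (rule ccontr)
    assume "A a \<noteq> {}"
    then obtain c where c: "c \<in> A a" by blast
    hence c1: "1 \<le> c" "c < a" by (auto simp: A_def)
    have "L c + L a \<ge> 2*n - 2*k" using theta_cond[OF c1 a(2)] c by simp
    moreover have "L c \<le> L a" by (rule L_mono) (use c1 a in auto)
    ultimately have "L c = n - k" using a by simp
    thus False using mn[OF c1(2)] c1 a by simp
  qed
  hence "G a = n - k" using a by (simp add: G_def)
  thus "\<exists>b\<in>{1..k}. G b = n - k" using a by auto
qed

lemma member: "Fk k n S \<in> Ptilde (n - k) n"
proof -
  define \<gamma> where "\<gamma> = map (\<lambda>i. G (k + 1 - i)) [1..<k+1]"
  have len: "length \<gamma> = k" by (simp add: \<gamma>_def)
  have nth: "\<gamma> ! j = G (k - j)" if "j < k" for j using that by (simp add: \<gamma>_def del: upt_Suc)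
  have nk: "n - (n - k) = k" using kn by simp
  have c2: "\<gamma> ! i \<ge> \<gamma> ! (i + 1)" if "i + 1 < length \<gamma>" for i
  proof -
    have "G (k - (i+1)) \<le> G (k - i)" by (rule G_mono) (use that len in auto)
    thus ?thesis using that len nth by simp
  qed
  have c3: "\<gamma> ! i \<le> 2*n - 1 - (n - (n - k))" if "i < length \<gamma>" for i
    using G_le[of "k - i"] that len nth nk by simp
  have c4: "\<gamma> ! i > \<gamma> ! (i + 1)" if "i + 1 < length \<gamma>" "\<gamma> ! i > n - k" for i
  proof -
    have e: "k - (i+1) = k - i - 1" by simp
    have "G (k - i - 1) < G (k - i)" by (rule G_strict) (use that len nth in auto)
    thus ?thesis using that len nth e by simp
  qed
  have setg: "(n - k \<in> set \<gamma>) \<longleftrightarrow> (\<exists>a\<in>{1..k}. L a = n - k)"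
  proof -
    have sg: "set \<gamma> = (\<lambda>i. G (k + 1 - i)) ` {1..k}"
      unfolding \<gamma>_def by (simp add: atLeastLessThanSuc_atLeastAtMost del: upt_Suc)
    have "(n - k \<in> set \<gamma>) \<longleftrightarrow> (\<exists>i\<in>{1..k}. G (k + 1 - i) = n - k)"
      unfolding sg image_iff by (metis)
    also have "\<dots> \<longleftrightarrow> (\<exists>b\<in>{1..k}. G b = n - k)" by (rule flip_ex)
    finally show ?thesis using G_nk by simp
  qed
  have c5: "if n - k \<in> set \<gamma> then arrow k n S \<in> {1, 2} else arrow k n S = 0"
    using setg arrow0 arrow_range by auto
  show ?thesis unfolding Fk_eq \<gamma>_def[symmetric] Ptilde_def
    using len nk c2 c3 c4 c5 by auto
qed


lemma M_dc: "1 \<le> a \<Longrightarrow> a \<le> k \<Longrightarrow> \<forall>x\<in>M a. \<forall>y. k < y \<and> y \<le> x \<longrightarrow> y \<in> M a"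
  by (intro ballI allI impI) (erule M_down, simp_all)

lemma P_uc: "1 \<le> a \<Longrightarrow> a \<le> k \<Longrightarrow> \<forall>x\<in>P a. \<forall>y. x \<le> y \<and> y < Suc n \<longrightarrow> y \<in> P a"
  by (intro ballI allI impI) (erule P_up, simp_all)

lemma A_uc: "b \<le> k \<Longrightarrow> \<forall>x\<in>A b. \<forall>y. x \<le> y \<and> y < b \<longrightarrow> y \<in> A b"
  by (intro ballI allI impI) (erule A_up, simp_all)

lemma M_sub': "M a \<subseteq> {k<..}" and P_sub': "P a \<subseteq> {..<Suc n}" and A_sub': "A b \<subseteq> {..<b}"
  by (auto simp: M_def P_def A_def)

end

lemma down_cmp:
  fixes X Y :: "nat set"
  assumes "\<forall>x\<in>X. \<forall>y. lo < y \<and> y \<le> x \<longrightarrow> y \<in> X" "\<forall>x\<in>Y. \<forall>y. lo < y \<and> y \<le> x \<longrightarrow> y \<in> Y"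
    "X \<subseteq> {lo<..}" "Y \<subseteq> {lo<..}"
  shows "X \<subseteq> Y \<or> Y \<subseteq> X"
proof (rule ccontr)
  assume "\<not> (X \<subseteq> Y \<or> Y \<subseteq> X)"
  then obtain x y where h: "x \<in> X" "x \<notin> Y" "y \<in> Y" "y \<notin> X" by blast
  show False
  proof (cases "x \<le> y")
    case True
    have "lo < x" using h(1) assms(3) by auto
    thus False using assms(2) h True by blast
  next
    case False
    have "lo < y" using h(3) assms(4) by auto
    moreover have "y \<le> x" using False by simp
    ultimately show False using assms(1) h by blast
  qed
qed

lemma up_cmp:
  fixes X Y :: "nat set"
  assumes "\<forall>x\<in>X. \<forall>y. x \<le> y \<and> y < hi \<longrightarrow> y \<in> X" "\<forall>x\<in>Y. \<forall>y. x \<le> y \<and> y < hi \<longrightarrow> y \<in> Y"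
    "X \<subseteq> {..<hi}" "Y \<subseteq> {..<hi}"
  shows "X \<subseteq> Y \<or> Y \<subseteq> X"
proof (rule ccontr)
  assume "\<not> (X \<subseteq> Y \<or> Y \<subseteq> X)"
  then obtain x y where h: "x \<in> X" "x \<notin> Y" "y \<in> Y" "y \<notin> X" by blast
  show False
  proof (cases "x \<le> y")
    case True
    have "y < hi" using h(3) assms(4) by auto
    thus False using assms(1) h(1,4) True by blast
  next
    case False
    have "x < hi" using h(1) assms(3) by auto
    moreover have "y \<le> x" using False by simp
    ultimately show False using assms(2) h(2,3) by blast
  qed
qed

lemma cmp_eq: "finite X \<Longrightarrow> finite Y \<Longrightarrow> X \<subseteq> Y \<or> Y \<subseteq> X \<Longrightarrow> card X = card Y \<Longrightarrow> X = Y"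
proof -
  assume f: "finite X" "finite Y" and d: "X \<subseteq> Y \<or> Y \<subseteq> X" and c: "card X = card Y"
  from d show "X = Y"
  proof
    assume "X \<subseteq> Y" thus "X = Y" using card_subset_eq[OF f(2) _ c] by simp
  next
    assume "Y \<subseteq> X" thus "X = Y" using card_subset_eq[OF f(1) _ c[symmetric]] by simp
  qed
qed

lemma step1:
  assumes s: "th k n S" and t: "th k n S'" and b: "1 \<le> b" "b \<le> k"
    and IH: "\<forall>c. 1 \<le> c \<and> c < b \<longrightarrow> th.L k n S c = th.L k n S' c"
    and lt: "th.L k n S b < th.L k n S' b"
  shows "th.G k n S b < th.G k n S' b"
proof -
  interpret s: th k n S by (rule s)
  interpret t: th k n S' by (rule t)
  have sub: "s.A b \<subseteq> t.A b"
  proof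
    fix c assume c: "c \<in> s.A b"
    hence c1: "1 \<le> c" "c < b" by (auto simp: s.A_def)
    have "s.L c + s.L b \<ge> 2*n - 2*k" using s.theta_cond[OF c1 b(2)] c by blast
    hence "t.L c + t.L b > 2*n - 2*k" using IH c1 lt by simp
    thus "c \<in> t.A b" using t.theta_cond[OF c1 b(2)] by blast
  qed
  have "card (s.A b) \<le> card (t.A b)" using card_mono[OF t.fin(3) sub] .
  thus ?thesis using lt by (simp add: s.G_def t.G_def)
qed

lemma L_eq:
  assumes s: "th k n S" and t: "th k n S'"
    and G: "\<forall>b\<in>{1..k}. th.G k n S b = th.G k n S' b"
  shows "1 \<le> b \<Longrightarrow> b \<le> k \<Longrightarrow> th.L k n S b = th.L k n S' b"
proof (induction b rule: less_induct)
  case (less b)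
  have IH: "\<forall>c. 1 \<le> c \<and> c < b \<longrightarrow> th.L k n S c = th.L k n S' c" using less by auto
  have IH': "\<forall>c. 1 \<le> c \<and> c < b \<longrightarrow> th.L k n S' c = th.L k n S c" using IH by auto
  show ?case
  proof (rule ccontr)
    assume "th.L k n S b \<noteq> th.L k n S' b"
    hence "th.L k n S b < th.L k n S' b \<or> th.L k n S' b < th.L k n S b" by auto
    thus False
    proof
      assume "th.L k n S b < th.L k n S' b"
      from step1[OF s t less.prems IH this] show False using G less.prems by auto
    next
      assume "th.L k n S' b < th.L k n S b"
      from step1[OF t s less.prems IH' this] show False using G less.prems by auto
    qed
  qed
qed

lemma A_eq:
  assumes s: "th k n S" and t: "th k n S'"
    and G: "\<forall>b\<in>{1..k}. th.G k n S b = th.G k n S' b" and b: "1 \<le> b" "b \<le> k"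
  shows "th.A S b = th.A S' b"
proof -
  interpret s: th k n S by (rule s)
  interpret t: th k n S' by (rule t)
  have "s.L b = t.L b" using L_eq[OF s t G b] .
  moreover have "s.G b = t.G b" using G b by auto
  ultimately have c: "card (s.A b) = card (t.A b)" unfolding s.G_def t.G_def by simp
  have "s.A b \<subseteq> t.A b \<or> t.A b \<subseteq> s.A b"
    by (rule up_cmp[OF s.A_uc[OF b(2)] t.A_uc[OF b(2)] s.A_sub' t.A_sub'])
  thus ?thesis using cmp_eq[OF s.fin(3) t.fin(3) _ c] by blast
qed

lemma MP_aux:
  assumes s: "th k n S" and t: "th k n S'" and a: "1 \<le> a" "a \<le> k"
    and L: "th.L k n S a = th.L k n S' a" and ar: "arrow k n S = arrow k n S'"
    and lt: "card (th.M k n S a) < card (th.M k n S' a)"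
  shows False
proof -
  interpret s: th k n S by (rule s)
  interpret t: th k n S' by (rule t)
  have "s.M a \<subseteq> t.M a \<or> t.M a \<subseteq> s.M a"
    by (rule down_cmp[OF s.M_dc[OF a] t.M_dc[OF a] s.M_sub' t.M_sub'])
  moreover have "\<not> t.M a \<subseteq> s.M a"
  proof
    assume "t.M a \<subseteq> s.M a"
    hence "card (t.M a) \<le> card (s.M a)" using card_mono[OF s.fin(1)] by blast
    thus False using lt by simp
  qed
  ultimately have Ms: "s.M a \<subseteq> t.M a" by blast
  have Pl: "card (t.P a) < card (s.P a)" using L lt by (simp add: s.L_def t.L_def)
  have "s.P a \<subseteq> t.P a \<or> t.P a \<subseteq> s.P a"
    by (rule up_cmp[OF s.P_uc[OF a] t.P_uc[OF a] s.P_sub' t.P_sub'])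
  moreover have "\<not> s.P a \<subseteq> t.P a"
  proof
    assume "s.P a \<subseteq> t.P a"
    hence "card (s.P a) \<le> card (t.P a)" using card_mono[OF t.fin(2)] by blast
    thus False using Pl by simp
  qed
  ultimately have Ps: "t.P a \<subseteq> s.P a" by blast
  have "s.P a \<noteq> t.P a" using Pl by auto
  then obtain j where j: "j \<in> s.P a" "j \<notin> t.P a" using Ps by blast
  have sMn: "card (s.M a) < n - k" using lt t.card_M[of a] by simp
  have jn: "j = n"
  proof (rule ccontr)
    assume "j \<noteq> n"
    have "{k<..n} \<subseteq> s.M a"
    proof
      fix x assume "x \<in> {k<..n}"
      thus "x \<in> s.M a" using s.P_M[OF j(1) _ _ _ a, of x] \<open>j \<noteq> n\<close> by simp
    qed
    hence "card {k<..n} \<le> card (s.M a)" using card_mono[OF s.fin(1)] by blast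
    thus False using sMn by simp
  qed
  have tP: "t.P a = {}"
  proof (rule ccontr)
    assume "t.P a \<noteq> {}"
    then obtain y where "y \<in> t.P a" by blast
    hence "n \<in> t.P a" by (rule t.P_n[OF _ a])
    thus False using j(2) jn by simp
  qed
  have snM: "n \<notin> s.M a"
  proof
    assume "n \<in> s.M a"
    hence "s.M a = {k<..n}" by (rule s.M_full[OF _ a])
    thus False using sMn by simp
  qed
  have "s.M a \<noteq> t.M a" using lt by auto
  then obtain x where x: "x \<in> t.M a" "x \<notin> s.M a" using Ms by blast
  have "x \<in> {k<..n}" using x(1) t.M_sub by blast
  hence "x = n" using s.P_M[OF j(1)[unfolded jn], of x] a x(2) by (metis greaterThanAtMost_iff)
  hence tMn: "n \<in> t.M a" using x by simp
  have "t.L a = n - k" using t.M_full[OF tMn a] tP by (simp add: t.L_def)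
  hence sL: "s.L a = n - k" using L by simp
  have "\<exists>a\<in>{1..k}. t.L a = n - k \<and> n \<in> t.M a" using a tMn \<open>t.L a = n - k\<close> by auto
  hence "arrow k n S' = 1" using t.arrow1 by simp
  hence "arrow k n S = 1" using ar by simp
  hence "\<exists>a\<in>{1..k}. s.L a = n - k \<and> n \<in> s.M a" using s.arrow1 by simp
  then obtain a' where a': "1 \<le> a'" "a' \<le> k" "s.L a' = n - k" "n \<in> s.M a'" by auto
  show False using s.consist[OF sL a'(3) j(1)[unfolded jn] a'(4) a a'(1,2)] .
qed

lemma MP_eq:
  assumes s: "th k n S" and t: "th k n S'" and a: "1 \<le> a" "a \<le> k"
    and L: "th.L k n S a = th.L k n S' a" and ar: "arrow k n S = arrow k n S'"
  shows "th.M k n S a = th.M k n S' a \<and> th.P k n S a = th.P k n S' a"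
proof -
  interpret s: th k n S by (rule s)
  interpret t: th k n S' by (rule t)
  have cM: "card (s.M a) = card (t.M a)"
    using MP_aux[OF s t a L ar] MP_aux[OF t s a L[symmetric] ar[symmetric]] linorder_neqE_nat by blast
  have "s.M a \<subseteq> t.M a \<or> t.M a \<subseteq> s.M a"
    by (rule down_cmp[OF s.M_dc[OF a] t.M_dc[OF a] s.M_sub' t.M_sub'])
  hence 1: "s.M a = t.M a" using cmp_eq[OF s.fin(1) t.fin(1) _ cM] by blast
  have cP: "card (s.P a) = card (t.P a)" using L cM by (simp add: s.L_def t.L_def)
  have "s.P a \<subseteq> t.P a \<or> t.P a \<subseteq> s.P a"
    by (rule up_cmp[OF s.P_uc[OF a] t.P_uc[OF a] s.P_sub' t.P_sub'])
  hence "s.P a = t.P a" using cmp_eq[OF s.fin(2) t.fin(2) _ cP] by blast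
  with 1 show ?thesis by simp
qed

lemma S_subset:
  assumes s: "th k n S" and t: "th k n S'"
    and eq: "\<forall>a\<in>{1..k}. th.M k n S a = th.M k n S' a \<and> th.P k n S a = th.P k n S' a \<and> th.A S a = th.A S' a"
  shows "S \<subseteq> S'"
proof
  interpret s: th k n S by (rule s)
  interpret t: th k n S' by (rule t)
  fix x assume x: "x \<in> S"
  hence "x \<in> base_region k n \<or> x \<in> top_region k" using s.S_sub by blast
  thus "x \<in> S'"
  proof
    assume "x \<in> base_region k n"
    then obtain a j where aj: "1 \<le> a" "a \<le> k" "k < j" "j \<le> n" "x = rminus a j \<or> x = rplus a j"
      unfolding base_region_def by blast
    show "x \<in> S'"
    proof (cases "x = rminus a j")
      case True
      hence "j \<in> s.M a" using x aj by (simp add: s.M_def)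
      hence "j \<in> t.M a" using eq aj by auto
      thus ?thesis using True by (simp add: t.M_def)
    next
      case False
      hence xp: "x = rplus a j" using aj by simp
      hence "j \<in> s.P a" using x aj by (simp add: s.P_def)
      hence "j \<in> t.P a" using eq aj by auto
      thus ?thesis using xp by (simp add: t.P_def)
    qed
  next
    assume "x \<in> top_region k"
    then obtain c b where cb: "1 \<le> c" "c < b" "b \<le> k" "x = rplus c b"
      unfolding top_region_def by blast
    hence "c \<in> s.A b" using x by (simp add: s.A_def)
    hence "c \<in> t.A b" using eq cb by auto
    thus "x \<in> S'" using cb by (simp add: t.A_def)
  qed
qed

theorem lemma3p16:
  fixes k n :: nat
  assumes "1 \<le> k" and "k < n"
  shows "(\<forall>S\<in>Theta k n. Fk k n S \<in> Ptilde (n - k) n) \<and> inj_on (Fk k n) (Theta k n)"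
proof
  show "\<forall>S\<in>Theta k n. Fk k n S \<in> Ptilde (n - k) n"
  proof
    fix S assume "S \<in> Theta k n"
    then interpret s: th k n S using th.intro[OF assms] by blast
    show "Fk k n S \<in> Ptilde (n - k) n" by (rule s.member)
  qed
  show "inj_on (Fk k n) (Theta k n)"
  proof (rule inj_onI)
    fix S S' assume S: "S \<in> Theta k n" and S': "S' \<in> Theta k n" and F: "Fk k n S = Fk k n S'"
    have s: "th k n S" using th.intro[OF assms S] .
    have t: "th k n S'" using th.intro[OF assms S'] .
    interpret s: th k n S by (rule s)
    interpret t: th k n S' by (rule t)
    have F2: "map (\<lambda>i. s.G (k + 1 - i)) [1..<k+1] = map (\<lambda>i. t.G (k + 1 - i)) [1..<k+1]"
      and ar: "arrow k n S = arrow k n S'" using F unfolding s.Fk_eq t.Fk_eq prod.inject by blast+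
    have G: "\<forall>b\<in>{1..k}. s.G b = t.G b"
    proof
      fix b assume b: "b \<in> {1..k}"
      have all: "\<forall>i\<in>set [1..<k+1]. s.G (k + 1 - i) = t.G (k + 1 - i)" using F2 by (simp only: map_eq_conv)
      have "k + 1 - b \<in> set [1..<k+1]" using b by (auto simp del: upt_Suc)
      hence "s.G (k + 1 - (k + 1 - b)) = t.G (k + 1 - (k + 1 - b))" using all by blast
      moreover have "k + 1 - (k + 1 - b) = b" using b by auto
      ultimately show "s.G b = t.G b" by simp
    qed
    have eq: "\<forall>a\<in>{1..k}. s.M a = t.M a \<and> s.P a = t.P a \<and> s.A a = t.A a"
    proof
      fix a assume a: "a \<in> {1..k}"
      hence a2: "1 \<le> a" "a \<le> k" by auto
      have L: "s.L a = t.L a" using L_eq[OF s t G a2] .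
      show "s.M a = t.M a \<and> s.P a = t.P a \<and> s.A a = t.A a"
        using MP_eq[OF s t a2 L ar] A_eq[OF s t G a2] by simp
    qed
    have eq': "\<forall>a\<in>{1..k}. t.M a = s.M a \<and> t.P a = s.P a \<and> t.A a = s.A a" using eq by simp
    show "S = S'" using S_subset[OF s t eq] S_subset[OF t s eq'] by blast
  qed
qed

end
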